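(* In the setting described in the context, let $\mu$ be the probability distribution on $\overline{\mathbb{R}}$ of the almost surely defined limit $\zeta=\lim_{m\to\infty}z_m$. Then $$\mu=\tfrac13\big((\tau_1)_*\mu+(\tau_2)_*\mu+(\tau_3)_*\mu\big),$$ where $(\tau_i)_*\mu$ is the pushforward of $\mu$ under $\tau_i|_{\overline{\mathbb{R}}}\colon\overline{\mathbb{R}}\to\overline{\mathbb{R}}$.
   Context: Let $\mathbb{H}=\{z\in\mathbb{C}:\operatorname{Im}z>0\}$ be the Poincaré upper half-plane (metric $(dx^2+dy^2)/y^2$), $\overline{\mathbb{R}}=\mathbb{R}\cup\{\infty\}$, and $\overline{\mathbb{H}}=\mathbb{H}\cup\overline{\mathbb{R}}$ (a closed disk). A (hyperbolic) line is a set $\{z\in\mathbb{H}:\operatorname{Re}z=x\}$ or $\{z\in\mathbb{H}:|z-x|=r\}$ with $x\in\mathbb{R}$, $r>0$; its reflection $t_L$ is $t_L(z)=2x-\bar z$, resp. $t_L(z)=r^2/(\bar z-x)+x$, extended continuously to $\overline{\mathbb{H}}$. Fix lines $L_1,L_2,L_3\subseteq\mathbb{H}$ and $z_0\in\mathbb{H}$ such that for all distinct $i,i'\in\{1,2,3\}$ either (a) $L_i\cap L_{i'}=\emptyset$ and $z_0$ lies in the connected component of $\mathbb{H}\setminus(L_i\cup L_{i'})$ whose boundary contains both lines, or (b) $L_i,L_{i'}$ meet at an angle of measure $\pi/m(i,i')$ with $m(i,i')\ge2$ an integer, and $z_0$ lies in the interior of that angle. Let $s_i=t_{L_i}$, let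 $W$ be the group generated by $S=\{s_1,s_2,s_3\}$, and let $\ell$ be the word length with respect to $S$. The one-way reflection $\tau_i\colon\overline{\mathbb{H}}\to\overline{\mathbb{H}}$ is $\tau_i(z)=s_i(z)$ if $z$ and $z_0$ are on the same side of $L_i$ and $\tau_i(z)=z$ otherwise; it is continuous. Let $i_1,i_2,\ldots$ be independent uniform random elements of $\{1,2,3\}$ and $z_m=(\tau_{i_1}\circ\cdots\circ\tau_{i_m})(z_0)$ (equivalently $z_m=u_m(z_0)$ where $u_0=1$, $u_{m+1}=u_ms_{i_{m+1}}$ if $\ell(u_ms_{i_{m+1}})>\ell(u_m)$ and $u_{m+1}=u_m$ otherwise). It is known that $z_m$ converges almost surely to a limit $\zeta\in\overline{\mathbb{R}}$. *)

theory Defs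
  imports "HOL-Probability.Probability"
begin

text \<open>Points of the closed disk Hbar = H \<union> R \<union> {\<infinity>} are represented as
  values of type complex option: Some z (with Im z \<ge> 0) is the finite point z,
  None is the point \<infinity>.\<close>

definition Hbar :: "complex option set" where
  "Hbar = insert None (Some ` {z. Im z \<ge> 0})"

definition Rbar :: "complex option set" where
  "Rbar = insert None (Some ` {z. Im z = 0})"

definition Rbar_M :: "complex option measure" where
  "Rbar_M = sigma Rbar (insert {None} ((\<lambda>B. Some ` B) ` {B \<in> sets borel. B \<subseteq> {z. Im z = 0}}))"

datatype hline = VLine real | Circ real real

definition valid_line :: "hline \<Rightarrow> bool" where
  "valid_line L = (case L of VLine x \<Rightarrow> True | Circ x r \<Rightarrow> r > 0)"

definition line_set :: "hline \<Rightarrow> complex set" where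
  "line_set L = (case L of
      VLine x \<Rightarrow> {z. Im z > 0 \<and> Re z = x}
    | Circ x r \<Rightarrow> {z. Im z > 0 \<and> cmod (z - of_real x) = r})"

text \<open>The reflection t_L, extended continuously to Hbar.\<close>
definition refl :: "hline \<Rightarrow> complex option \<Rightarrow> complex option" where
  "refl L w = (case L of
      VLine x \<Rightarrow> (case w of None \<Rightarrow> None | Some z \<Rightarrow> Some (2 * of_real x - cnj z))
    | Circ x r \<Rightarrow> (case w of None \<Rightarrow> Some (of_real x)
                   | Some z \<Rightarrow> if z = of_real x then None
                               else Some (of_real (r\<^sup>2) / (cnj z - of_real x) + of_real x)))"

text \<open>A signed quantity whose sign tells on which side of L a point of Hbar lies
  (zero exactly on the closure of L in Hbar).\<close>
definition side :: "hline \<Rightarrow> complex option \<Rightarrow> real" where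
  "side L w = (case L of
      VLine x \<Rightarrow> (case w of None \<Rightarrow> 0 | Some z \<Rightarrow> Re z - x)
    | Circ x r \<Rightarrow> (case w of None \<Rightarrow> 1 | Some z \<Rightarrow> cmod (z - of_real x) - r))"

definition same_side :: "hline \<Rightarrow> complex option \<Rightarrow> complex option \<Rightarrow> bool" where
  "same_side L w w' \<longleftrightarrow> side L w * side L w' > 0"

definition tau :: "hline \<Rightarrow> complex \<Rightarrow> complex option \<Rightarrow> complex option" where
  "tau L z0 w = (if same_side L w (Some z0) then refl L w else w)"

text \<open>Unit normal of L at a point p of L, pointing to the side where side L > 0.\<close>
definition normal :: "hline \<Rightarrow> complex \<Rightarrow> complex" where
  "normal L p = (case L of VLine x \<Rightarrow> 1 | Circ x r \<Rightarrow> (p - of_real x) / of_real r)"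

definition cond_a :: "hline \<Rightarrow> hline \<Rightarrow> complex \<Rightarrow> bool" where
  "cond_a L L' z0 \<longleftrightarrow> line_set L \<inter> line_set L' = {} \<and>
     z0 \<in> {z. Im z > 0} - (line_set L \<union> line_set L') \<and>
     (let C = connected_component_set ({z. Im z > 0} - (line_set L \<union> line_set L')) z0
      in line_set L \<subseteq> frontier C \<and> line_set L' \<subseteq> frontier C)"

text \<open>Condition (b): L and L' meet at a point p at an angle of measure pi/m (m \<ge> 2),
  and z0 lies in the interior of that angle, i.e. in the region (sector at p) cut out
  by L and L' containing z0, whose interior angle at p is pi/m.  The interior angle of
  the sector {e*side L > 0, e'*side L' > 0} at p equals pi minus the angle between the
  normals e*n and e'*n'.\<close>
definition cond_b :: "hline \<Rightarrow> hline \<Rightarrow> complex \<Rightarrow> bool" where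
  "cond_b L L' z0 \<longleftrightarrow> (\<exists>p m::nat. p \<in> line_set L \<inter> line_set L' \<and> m \<ge> 2 \<and>
     Im z0 > 0 \<and> side L (Some z0) \<noteq> 0 \<and> side L' (Some z0) \<noteq> 0 \<and>
     (let v = of_real (sgn (side L (Some z0))) * normal L p;
          v' = of_real (sgn (side L' (Some z0))) * normal L' p
      in Re (cnj v * v') = - cos (pi / real m)))"

definition hbar_tendsto :: "(nat \<Rightarrow> complex option) \<Rightarrow> complex option \<Rightarrow> bool" where
  "hbar_tendsto f l = (case l of
      Some a \<Rightarrow> (\<forall>\<^sub>F n in sequentially. f n \<noteq> None) \<and> ((\<lambda>n. the (f n)) \<longlonglongrightarrow> a)
    | None \<Rightarrow> (\<forall>B. \<forall>\<^sub>F n in sequentially. f n = None \<or> cmod (the (f n)) > B))"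

text \<open>z_m = (tau_{i_1} o ... o tau_{i_m})(z0), where i_{k+1} = I k \<omega>.\<close>
definition zseq :: "(nat \<Rightarrow> hline) \<Rightarrow> complex \<Rightarrow> (nat \<Rightarrow> 'a \<Rightarrow> nat) \<Rightarrow> 'a \<Rightarrow> nat \<Rightarrow> complex option" where
  "zseq Ls z0 I \<omega> m = foldr (\<lambda>k w. tau (Ls (I k \<omega>)) z0 w) [0..<m] (Some z0)"

end

theory Submission
  imports Defs
begin



lemma ht_Some: "hbar_tendsto w (Some a) \<longleftrightarrow>
   (\<forall>e>0. \<forall>\<^sub>F n in sequentially. \<exists>z. w n = Some z \<and> dist z a < e)"
proof
  assume h: "hbar_tendsto w (Some a)"
  hence e1: "\<forall>\<^sub>F n in sequentially. w n \<noteq> None" and t: "(\<lambda>n. the (w n)) \<longlonglongrightarrow> a"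
    by (auto simp: hbar_tendsto_def)
  show "\<forall>e>0. \<forall>\<^sub>F n in sequentially. \<exists>z. w n = Some z \<and> dist z a < e"
  proof (intro allI impI)
    fix e :: real assume "e > 0"
    with t have "\<forall>\<^sub>F n in sequentially. dist (the (w n)) a < e" by (simp add: tendsto_iff)
    with e1 show "\<forall>\<^sub>F n in sequentially. \<exists>z. w n = Some z \<and> dist z a < e"
      by eventually_elim auto
  qed
next
  assume h: "\<forall>e>0. \<forall>\<^sub>F n in sequentially. \<exists>z. w n = Some z \<and> dist z a < e"
  have "\<forall>\<^sub>F n in sequentially. w n \<noteq> None"
    using h[rule_format, of 1] by (auto elim: eventually_mono)
  moreover have "(\<lambda>n. the (w n)) \<longlonglongrightarrow> a"
    unfolding tendsto_iff
  proof (intro allI impI)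
    fix e :: real assume "e > 0"
    then show "\<forall>\<^sub>F n in sequentially. dist (the (w n)) a < e"
      using h[rule_format, of e] by (auto elim: eventually_mono)
  qed
  ultimately show "hbar_tendsto w (Some a)" by (simp add: hbar_tendsto_def)
qed

lemma ht_None: "hbar_tendsto w None \<longleftrightarrow>
   (\<forall>B. \<forall>\<^sub>F n in sequentially. \<forall>z. w n = Some z \<longrightarrow> cmod z > B)"
  unfolding hbar_tendsto_def
proof (simp, intro iffI allI)
  fix B assume "\<forall>B. \<forall>\<^sub>F n in sequentially. w n = None \<or> B < cmod (the (w n))"
  then show "\<forall>\<^sub>F n in sequentially. \<forall>z. w n = Some z \<longrightarrow> B < cmod z"
    by (auto elim: eventually_mono[OF spec[of _ B]])
next
  fix B assume "\<forall>B. \<forall>\<^sub>F n in sequentially. \<forall>z. w n = Some z \<longrightarrow> B < cmod z"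
  then have "\<forall>\<^sub>F n in sequentially. \<forall>z. w n = Some z \<longrightarrow> B < cmod z" by blast
  then show "\<forall>\<^sub>F n in sequentially. w n = None \<or> B < cmod (the (w n))"
    by (rule eventually_mono) (metis option.collapse)
qed

lemma ht_eventually_eq:
  assumes "hbar_tendsto w l" "\<forall>\<^sub>F n in sequentially. v n = w n"
  shows "hbar_tendsto v l"
proof (cases l)
  case None
  show ?thesis using assms unfolding None ht_None
  proof (intro allI)
    fix B assume a: "\<forall>B. \<forall>\<^sub>F n in sequentially. \<forall>z. w n = Some z \<longrightarrow> B < cmod z"
      and b: "\<forall>\<^sub>F n in sequentially. v n = w n"
    from a[rule_format, of B] b show "\<forall>\<^sub>F n in sequentially. \<forall>z. v n = Some z \<longrightarrow> B < cmod z"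
      by eventually_elim auto
  qed
next
  case (Some a)
  show ?thesis using assms unfolding Some ht_Some
  proof (intro allI impI)
    fix e :: real assume a: "\<forall>e>0. \<forall>\<^sub>F n in sequentially. \<exists>z. w n = Some z \<and> dist z a < e"
      and b: "\<forall>\<^sub>F n in sequentially. v n = w n" and e: "e > 0"
    from a[rule_format, OF e] b show "\<forall>\<^sub>F n in sequentially. \<exists>z. v n = Some z \<and> dist z a < e"
      by eventually_elim auto
  qed
qed

lemma ht_either:
  assumes "hbar_tendsto u l" "hbar_tendsto w l" "\<And>n. v n = u n \<or> v n = w n"
  shows "hbar_tendsto v l"
proof (cases l)
  case None
  show ?thesis using assms(1,2) unfolding None ht_None
  proof (intro allI)
    fix B assume a: "\<forall>B. \<forall>\<^sub>F n in sequentially. \<forall>z. u n = Some z \<longrightarrow> B < cmod z"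
      and b: "\<forall>B. \<forall>\<^sub>F n in sequentially. \<forall>z. w n = Some z \<longrightarrow> B < cmod z"
    from a[rule_format, of B] b[rule_format, of B]
    show "\<forall>\<^sub>F n in sequentially. \<forall>z. v n = Some z \<longrightarrow> B < cmod z"
      by eventually_elim (metis assms(3))
  qed
next
  case (Some a)
  show ?thesis using assms(1,2) unfolding Some ht_Some
  proof (intro allI impI)
    fix e :: real assume a: "\<forall>e>0. \<forall>\<^sub>F n in sequentially. \<exists>z. u n = Some z \<and> dist z a < e"
      and b: "\<forall>e>0. \<forall>\<^sub>F n in sequentially. \<exists>z. w n = Some z \<and> dist z a < e" and e: "e > 0"
    from a[rule_format, OF e] b[rule_format, OF e]
    show "\<forall>\<^sub>F n in sequentially. \<exists>z. v n = Some z \<and> dist z a < e"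
      by eventually_elim (metis assms(3))
  qed
qed




lemma ht_local:
  assumes c: "continuous (at a) h" and d0: "d0 > 0"
    and T: "\<And>z. dist z a < d0 \<Longrightarrow> T (Some z) = Some (h z)"
    and w: "hbar_tendsto w (Some a)"
  shows "hbar_tendsto (\<lambda>n. T (w n)) (Some (h a))"
  unfolding ht_Some
proof (intro allI impI)
  fix e :: real assume e: "e > 0"
  from c e obtain d where d: "d > 0" "\<And>z. dist z a < d \<Longrightarrow> dist (h z) (h a) < e"
    unfolding continuous_at_eps_delta by blast
  have "min d d0 > 0" using d d0 by simp
  with w have "\<forall>\<^sub>F n in sequentially. \<exists>z. w n = Some z \<and> dist z a < min d d0"
    unfolding ht_Some by blast
  then show "\<forall>\<^sub>F n in sequentially. \<exists>z. T (w n) = Some z \<and> dist z (h a) < e"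
  proof eventually_elim
    case (elim n)
    then obtain z where "w n = Some z" "dist z a < min d d0" by blast
    then show ?case using T d by auto
  qed
qed

definition hcont :: "(complex option \<Rightarrow> complex option) \<Rightarrow> bool" where
  "hcont T \<longleftrightarrow> (\<forall>w l. hbar_tendsto w l \<longrightarrow> hbar_tendsto (\<lambda>n. T (w n)) (T l))"

lemma refl_VLine_cont: "hcont (refl (VLine x))"
  unfolding hcont_def
proof (intro allI impI)
  fix w l assume w: "hbar_tendsto w l"
  define h where "h = (\<lambda>z. 2 * complex_of_real x - cnj z)"
  have R: "\<And>v. refl (VLine x) v = map_option h v"
    by (simp add: refl_def h_def split: option.splits)
  show "hbar_tendsto (\<lambda>n. refl (VLine x) (w n)) (refl (VLine x) l)"
  proof (cases l)
    case None
    show ?thesis unfolding None R option.map(1) ht_None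
    proof
      fix B
      from w have "\<forall>\<^sub>F n in sequentially. \<forall>z. w n = Some z \<longrightarrow> B + 2 * \<bar>x\<bar> < cmod z"
        unfolding None ht_None by blast
      then show "\<forall>\<^sub>F n in sequentially. \<forall>z. map_option h (w n) = Some z \<longrightarrow> B < cmod z"
      proof eventually_elim
        case (elim n)
        show ?case
        proof (intro allI impI)
          fix z assume "map_option h (w n) = Some z"
          then obtain u where u: "w n = Some u" "z = h u" by auto
          have "u = 2 * complex_of_real x - cnj z" using u by (simp add: h_def)
          then have "cmod u \<le> cmod z + cmod (2 * complex_of_real x)"
            using norm_triangle_ineq4[of "2 * complex_of_real x" "cnj z"] by simp
          moreover have "cmod (2 * complex_of_real x) = 2 * \<bar>x\<bar>" by (simp add: norm_mult)
          ultimately show "B < cmod z" using elim u by auto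
        qed
      qed
    qed
  next
    case (Some a)
    have "continuous (at a) h" unfolding h_def by (intro continuous_intros)
    then show ?thesis unfolding Some R
      using ht_local[of a h 1 "map_option h" w] w Some by simp
  qed
qed




lemma cmod_cnj_sub: "cmod (cnj z - complex_of_real x) = cmod (z - complex_of_real x)"
proof -
  have "cnj z - complex_of_real x = cnj (z - complex_of_real x)" by simp
  then show ?thesis by (metis complex_mod_cnj)
qed

lemma refl_Circ_cont:
  assumes r: "r > 0"
  shows "hcont (refl (Circ x r))"
  unfolding hcont_def
proof (intro allI impI)
  fix w l assume w: "hbar_tendsto w l"
  define h where "h = (\<lambda>z. complex_of_real (r\<^sup>2) / (cnj z - complex_of_real x) + complex_of_real x)"
  have R: "\<And>v. refl (Circ x r) v = (case v of None \<Rightarrow> Some (complex_of_real x)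
       | Some z \<Rightarrow> if z = complex_of_real x then None else Some (h z))"
    by (simp add: refl_def h_def split: option.splits)
  have hd: "cmod (h z - complex_of_real x) = r\<^sup>2 / cmod (z - complex_of_real x)" for z
    by (simp add: h_def norm_divide cmod_cnj_sub norm_power)
  show "hbar_tendsto (\<lambda>n. refl (Circ x r) (w n)) (refl (Circ x r) l)"
  proof (cases l)
    case None
    show ?thesis unfolding None R option.case ht_Some
    proof (intro allI impI)
      fix e :: real assume e: "e > 0"
      from w have "\<forall>\<^sub>F n in sequentially. \<forall>z. w n = Some z \<longrightarrow> \<bar>x\<bar> + r\<^sup>2 / e < cmod z"
        unfolding None ht_None by blast
      then show "\<forall>\<^sub>F n in sequentially. \<exists>z. (case w n of None \<Rightarrow> Some (complex_of_real x)
          | Some z \<Rightarrow> if z = complex_of_real x then None else Some (h z)) = Some z \<and> dist z (complex_of_real x) < e"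
      proof eventually_elim
        case (elim n)
        show ?case
        proof (cases "w n")
          case None then show ?thesis using e by simp
        next
          case (Some u)
          have "cmod u \<le> cmod (u - complex_of_real x) + \<bar>x\<bar>"
            using norm_triangle_ineq2[of u "complex_of_real x"] by simp
          with elim Some have big: "r\<^sup>2 / e < cmod (u - complex_of_real x)" by auto
          have pos: "0 < cmod (u - complex_of_real x)" using big e
            by (smt (verit) divide_nonneg_pos zero_le_power2)
          then have ux: "u \<noteq> complex_of_real x" by auto
          have "r\<^sup>2 < e * cmod (u - complex_of_real x)" using big e
            by (simp add: divide_less_eq mult.commute)
          then have "r\<^sup>2 / cmod (u - complex_of_real x) < e" using pos
            by (simp add: divide_less_eq mult.commute)
          then show ?thesis using Some ux hd by (simp add: dist_norm)
        qed
      qed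
    qed
  next
    case (Some a)
    show ?thesis
    proof (cases "a = complex_of_real x")
      case True
      show ?thesis unfolding Some True R option.case eq_commute[of "complex_of_real x"] simp_thms(6) if_True ht_None
      proof
        fix B
        define d where "d = r\<^sup>2 / (\<bar>B\<bar> + \<bar>x\<bar> + 1)"
        have d: "d > 0" unfolding d_def using r by simp
        from w d have "\<forall>\<^sub>F n in sequentially. \<exists>z. w n = Some z \<and> dist z (complex_of_real x) < d"
          unfolding Some True ht_Some by blast
        then show "\<forall>\<^sub>F n in sequentially. \<forall>z. (case w n of None \<Rightarrow> Some (complex_of_real x)
          | Some z \<Rightarrow> if z = complex_of_real x then None else Some (h z)) = Some z \<longrightarrow> B < cmod z"
        proof eventually_elim
          case (elim n)
          then obtain u where u: "w n = Some u" "dist u (complex_of_real x) < d" by blast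
          show ?case
          proof (intro allI impI)
            fix z assume "(case w n of None \<Rightarrow> Some (complex_of_real x)
              | Some z \<Rightarrow> if z = complex_of_real x then None else Some (h z)) = Some z"
            then have ux: "u \<noteq> complex_of_real x" and z: "z = h u" using u by (auto split: if_splits)
            have pos: "0 < cmod (u - complex_of_real x)" using ux by simp
            have "cmod (u - complex_of_real x) < r\<^sup>2 / (\<bar>B\<bar> + \<bar>x\<bar> + 1)"
              using u by (simp add: d_def dist_norm)
            then have "cmod (u - complex_of_real x) * (\<bar>B\<bar> + \<bar>x\<bar> + 1) < r\<^sup>2"
              by (simp add: less_divide_eq)
            then have "\<bar>B\<bar> + \<bar>x\<bar> + 1 < r\<^sup>2 / cmod (u - complex_of_real x)"
              using pos by (simp add: less_divide_eq mult.commute)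
            then have big: "\<bar>B\<bar> + \<bar>x\<bar> + 1 < cmod (h u - complex_of_real x)" using hd by simp
            have "cmod (h u - complex_of_real x) \<le> cmod (h u) + \<bar>x\<bar>"
              using norm_triangle_ineq4[of "h u" "complex_of_real x"] by simp
            then show "B < cmod z" using big abs_ge_self[of B] unfolding z by linarith
          qed
        qed
      qed
    next
      case False
      have c: "continuous (at a) h" unfolding h_def
        using False by (intro continuous_intros) (auto simp: complex_eq_iff)
      have d0: "cmod (a - complex_of_real x) > 0" using False by simp
      have T: "refl (Circ x r) (Some z) = Some (h z)" if "dist z a < cmod (a - complex_of_real x)" for z
      proof -
        have "z \<noteq> complex_of_real x" using that by (auto simp: dist_norm norm_minus_commute)
        then show ?thesis by (simp add: R)
      qed
      have "refl (Circ x r) (Some a) = Some (h a)" using False by (simp add: R)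
      then show ?thesis unfolding Some using ht_local[OF c d0 T] w Some by simp
    qed
  qed
qed




lemma ht_sign:
  fixes \<phi> :: "complex \<Rightarrow> real"
  assumes c: "continuous (at a) \<phi>" and p: "\<phi> a \<noteq> 0"
    and w: "hbar_tendsto w (Some a)"
  shows "\<forall>\<^sub>F n in sequentially. \<exists>z. w n = Some z \<and> sgn (\<phi> z) = sgn (\<phi> a)"
proof -
  have e: "\<bar>\<phi> a\<bar> > 0" using p by simp
  from c e obtain d where d: "d > 0" "\<And>z. dist z a < d \<Longrightarrow> dist (\<phi> z) (\<phi> a) < \<bar>\<phi> a\<bar>"
    unfolding continuous_at_eps_delta by blast
  from w d have "\<forall>\<^sub>F n in sequentially. \<exists>z. w n = Some z \<and> dist z a < d"
    unfolding ht_Some by blast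
  then show ?thesis
  proof eventually_elim
    case (elim n)
    then obtain z where z: "w n = Some z" "dist z a < d" by blast
    with d have "\<bar>\<phi> z - \<phi> a\<bar> < \<bar>\<phi> a\<bar>" by (simp add: dist_real_def)
    then have "sgn (\<phi> z) = sgn (\<phi> a)" by (auto simp: sgn_real_def split: if_splits)
    with z show ?case by blast
  qed
qed

lemma side_stable:
  assumes w: "hbar_tendsto w l" and s: "side L l \<noteq> 0"
  shows "\<forall>\<^sub>F n in sequentially. sgn (side L (w n)) = sgn (side L l)"
proof (cases l)
  case None
  then obtain x r where L: "L = Circ x r" using s by (cases L) (auto simp: side_def)
  from w have "\<forall>\<^sub>F n in sequentially. \<forall>z. w n = Some z \<longrightarrow> \<bar>x\<bar> + r < cmod z"
    unfolding None ht_None by blast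
  then show ?thesis
  proof eventually_elim
    case (elim n)
    show ?case
    proof (cases "w n")
      case None then show ?thesis using \<open>l = None\<close> by (simp add: L side_def)
    next
      case (Some u)
      have "cmod u \<le> cmod (u - complex_of_real x) + \<bar>x\<bar>"
        using norm_triangle_ineq2[of u "complex_of_real x"] by simp
      with elim Some have "r < cmod (u - complex_of_real x)" by auto
      then show ?thesis using Some \<open>l = None\<close> by (simp add: L side_def)
    qed
  qed
next
  case (Some a)
  define \<phi> where "\<phi> = (\<lambda>z. side L (Some z))"
  have c: "continuous (at a) \<phi>" unfolding \<phi>_def side_def
    by (cases L) (auto intro!: continuous_intros)
  have "\<phi> a \<noteq> 0" using s Some by (simp add: \<phi>_def)
  from ht_sign[OF c this] w Some
  have "\<forall>\<^sub>F n in sequentially. \<exists>z. w n = Some z \<and> sgn (\<phi> z) = sgn (\<phi> a)" by simp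
  then show ?thesis by eventually_elim (auto simp: \<phi>_def Some)
qed

lemma refl_fix:
  assumes v: "valid_line L" and s: "side L l = 0"
  shows "refl L l = l"
proof (cases L)
  case (VLine x)
  then show ?thesis using s
    by (cases l) (auto simp: refl_def side_def complex_eq_iff)
next
  case (Circ x r)
  with v have r: "r > 0" by (simp add: valid_line_def)
  from s Circ obtain z where l: "l = Some z" and zr: "cmod (z - complex_of_real x) = r"
    by (cases l) (auto simp: side_def)
  have zx: "z \<noteq> complex_of_real x" using zr r by auto
  have "(z - complex_of_real x) * cnj (z - complex_of_real x) = complex_of_real (r\<^sup>2)"
    using complex_norm_square[of "z - complex_of_real x"] zr by simp
  moreover have "cnj (z - complex_of_real x) \<noteq> 0" using zx by (metis complex_cnj_zero_iff right_minus_eq)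
  ultimately have "complex_of_real (r\<^sup>2) / (cnj z - complex_of_real x) = z - complex_of_real x"
    by (simp add: field_simps)
  then show ?thesis using l zx Circ by (simp add: refl_def)
qed

lemma refl_cont: "valid_line L \<Longrightarrow> hcont (refl L)"
  by (cases L) (auto simp: valid_line_def refl_VLine_cont refl_Circ_cont)

lemma tau_cont:
  assumes v: "valid_line L"
  shows "hcont (tau L z0)"
  unfolding hcont_def
proof (intro allI impI)
  fix w l assume w: "hbar_tendsto w l"
  define s0 where "s0 = side L (Some z0)"
  have T: "\<And>v. tau L z0 v = (if side L v * s0 > 0 then refl L v else v)"
    by (simp add: tau_def same_side_def s0_def)
  have rw: "hbar_tendsto (\<lambda>n. refl L (w n)) (refl L l)"
    using refl_cont[OF v] w by (simp add: hcont_def)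
  show "hbar_tendsto (\<lambda>n. tau L z0 (w n)) (tau L z0 l)"
  proof (cases "side L l = 0")
    case True
    have "tau L z0 l = l" using True by (simp add: T)
    moreover have "refl L l = l" using refl_fix[OF v True] .
    moreover have "\<And>n. tau L z0 (w n) = refl L (w n) \<or> tau L z0 (w n) = w n"
      by (simp add: T)
    ultimately show ?thesis using ht_either[OF rw] w by (metis (no_types, lifting))
  next
    case False
    have ev: "\<forall>\<^sub>F n in sequentially. (side L (w n) * s0 > 0) = (side L l * s0 > 0)"
      using side_stable[OF w False]
    proof eventually_elim
      case (elim n)
      have "sgn (side L (w n) * s0) = sgn (side L l * s0)" using elim by (simp add: sgn_mult)
      then show ?case by (metis sgn_pos sgn_greater)
    qed
    show ?thesis
    proof (cases "side L l * s0 > 0")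
      case True
      have "\<forall>\<^sub>F n in sequentially. tau L z0 (w n) = refl L (w n)"
        using ev by (rule eventually_mono) (use True in \<open>simp add: T\<close>)
      then show ?thesis using ht_eventually_eq[OF rw] True by (simp add: T)
    next
      case False
      have "\<forall>\<^sub>F n in sequentially. tau L z0 (w n) = w n"
        using ev by (rule eventually_mono) (use False in \<open>simp add: T\<close>)
      then show ?thesis using ht_eventually_eq[OF w] False by (simp add: T)
    qed
  qed
qed




definition gensR :: "complex option set set" where
  "gensR = insert {None} ((\<lambda>B. Some ` B) ` {B \<in> sets borel. B \<subseteq> {z. Im z = 0}})"

lemma gensR_Pow: "gensR \<subseteq> Pow Rbar"
  by (auto simp: gensR_def Rbar_def)

lemma Rbar_M_alt: "Rbar_M = sigma Rbar gensR"
  by (simp add: Rbar_M_def gensR_def)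

lemma space_Rbar_M: "space Rbar_M = Rbar"
  by (simp add: Rbar_M_alt gensR_Pow)

lemma sets_Rbar_M_sigma: "sets Rbar_M = sigma_sets Rbar gensR"
  by (simp add: Rbar_M_alt gensR_Pow)

lemma borel_axis: "{z::complex. Im z = 0} \<in> sets borel"
  by measurable

lemma sets_Rbar_M: "sets Rbar_M = {X. X \<subseteq> Rbar \<and> {z. Some z \<in> X} \<in> sets borel}"
proof (intro equalityI subsetI)
  fix X assume "X \<in> sets Rbar_M"
  then have "X \<in> sigma_sets Rbar gensR" by (simp add: sets_Rbar_M_sigma)
  then show "X \<in> {X. X \<subseteq> Rbar \<and> {z. Some z \<in> X} \<in> sets borel}"
  proof induct
    case (Basic a)
    then show ?case
    proof (cases "a = {None}")
      case True then show ?thesis by (simp add: Rbar_def)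
    next
      case False
      with Basic obtain B where "B \<in> sets borel" "B \<subseteq> {z. Im z = 0}" "a = Some ` B"
        by (auto simp: gensR_def)
      moreover have "{z. Some z \<in> Some ` B} = B" by auto
      ultimately show ?thesis by (auto simp: Rbar_def)
    qed
  next
    case Empty then show ?case by simp
  next
    case (Compl a)
    have "{z. Some z \<in> Rbar - a} = {z. Im z = 0} - {z. Some z \<in> a}"
      by (auto simp: Rbar_def)
    then show ?case using Compl borel_axis by auto
  next
    case (Union a)
    have "{z. Some z \<in> (\<Union>i. a i)} = (\<Union>i. {z. Some z \<in> a i})" by auto
    moreover have "(\<Union>i. a i) \<subseteq> Rbar" using Union by blast
    ultimately show ?case using Union by auto
  qed
next
  fix X assume X: "X \<in> {X. X \<subseteq> Rbar \<and> {z. Some z \<in> X} \<in> sets borel}"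
  define B where "B = {z. Some z \<in> X}"
  have B: "B \<in> sets borel" "B \<subseteq> {z. Im z = 0}" using X by (auto simp: B_def Rbar_def)
  have S: "Some ` B \<in> sigma_sets Rbar gensR"
    using B by (intro sigma_sets.Basic) (auto simp: gensR_def)
  have N: "{None} \<in> sigma_sets Rbar gensR"
    by (intro sigma_sets.Basic) (auto simp: gensR_def)
  have "X = Some ` B \<union> (X \<inter> {None})"
  proof (intro set_eqI)
    fix w show "w \<in> X \<longleftrightarrow> w \<in> Some ` B \<union> (X \<inter> {None})"
      by (cases w) (auto simp: B_def)
  qed
  moreover have "X \<inter> {None} \<in> sigma_sets Rbar gensR"
  proof (cases "None \<in> X")
    case True
    then have "X \<inter> {None} = {None}" by blast
    then show ?thesis using N by simp
  next
    case False
    then have "X \<inter> {None} = {}" by blast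
    then show ?thesis by (simp add: sigma_sets.Empty)
  qed
  ultimately have "X \<in> sigma_sets Rbar gensR"
    using S by (metis sigma_sets_Un)
  then show "X \<in> sets Rbar_M" by (simp add: sets_Rbar_M_sigma)
qed

lemma in_sets_Rbar_M: "X \<subseteq> Rbar \<Longrightarrow> {z. Some z \<in> X} \<in> sets borel \<Longrightarrow> X \<in> sets Rbar_M"
  by (simp add: sets_Rbar_M)

lemma measurable_Rbar_M_real:
  assumes "\<And>U. open U \<Longrightarrow> {z. Im z = 0 \<and> f (Some z) \<in> U} \<in> sets borel"
  shows "(f :: complex option \<Rightarrow> real) \<in> borel_measurable Rbar_M"
proof (rule borel_measurableI)
  fix S :: "real set" assume "open S"
  have "f -` S \<inter> space Rbar_M \<subseteq> Rbar" by (simp add: space_Rbar_M)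
  moreover have "{z. Some z \<in> f -` S \<inter> space Rbar_M} = {z. Im z = 0 \<and> f (Some z) \<in> S}"
    by (auto simp: space_Rbar_M Rbar_def)
  ultimately show "f -` S \<inter> space Rbar_M \<in> sets Rbar_M"
    using assms[OF \<open>open S\<close>] by (simp add: sets_Rbar_M)
qed

lemma measurable_Rbar_M_self:
  assumes maps: "\<And>w. w \<in> Rbar \<Longrightarrow> g w \<in> Rbar"
    and pre: "\<And>C b. C \<in> sets borel \<Longrightarrow>
      {z. Im z = 0 \<and> (case g (Some z) of None \<Rightarrow> b | Some u \<Rightarrow> u \<in> C)} \<in> sets borel"
  shows "g \<in> measurable Rbar_M Rbar_M"
proof (rule measurableI)
  fix w assume "w \<in> space Rbar_M" then show "g w \<in> space Rbar_M"
    using maps by (simp add: space_Rbar_M)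
next
  fix A assume A: "A \<in> sets Rbar_M"
  define C where "C = {u. Some u \<in> A}"
  have C: "C \<in> sets borel" using A by (simp add: sets_Rbar_M C_def)
  have "{z. Some z \<in> g -` A \<inter> space Rbar_M} =
     {z. Im z = 0 \<and> (case g (Some z) of None \<Rightarrow> None \<in> A | Some u \<Rightarrow> u \<in> C)}"
    by (auto simp: space_Rbar_M Rbar_def C_def split: option.splits) (metis option.exhaust)
  then show "g -` A \<inter> space Rbar_M \<in> sets Rbar_M"
    using pre[OF C, of "None \<in> A"] by (intro in_sets_Rbar_M) (auto simp: space_Rbar_M)
qed




lemma tau_Rbar: "w \<in> Rbar \<Longrightarrow> tau L z0 w \<in> Rbar"
proof (cases L)
  case (VLine x) assume "w \<in> Rbar" then show ?thesis
    by (cases w) (auto simp: VLine tau_def refl_def Rbar_def)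
next
  case (Circ x r) assume w: "w \<in> Rbar"
  show ?thesis
  proof (cases w)
    case None then show ?thesis by (auto simp: Circ tau_def refl_def Rbar_def)
  next
    case (Some z)
    with w have "Im z = 0" by (auto simp: Rbar_def)
    then have z: "z = complex_of_real (Re z)" by (simp add: complex_eq_iff)
    have "complex_of_real (r\<^sup>2) / (cnj z - complex_of_real x) + complex_of_real x =
       complex_of_real (r\<^sup>2 / (Re z - x) + x)"
      by (subst z, simp only: Complex.complex_cnj_complex_of_real) (simp)
    then show ?thesis using Some \<open>Im z = 0\<close> by (auto simp: Circ tau_def refl_def Rbar_def)
  qed
qed

lemma vimage_borel: "h \<in> borel_measurable borel \<Longrightarrow> C \<in> sets borel \<Longrightarrow> {z. h z \<in> C} \<in> sets borel"
  using measurable_sets[of h borel borel C] by (simp add: vimage_def)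

lemma open_pos: "continuous_on UNIV (\<phi> :: complex \<Rightarrow> real) \<Longrightarrow> {z. 0 < \<phi> z} \<in> sets borel"
  by (intro borel_open open_Collect_less continuous_intros) auto

lemma tau_meas: "tau L z0 \<in> measurable Rbar_M Rbar_M"
proof (rule measurable_Rbar_M_self)
  fix w assume "w \<in> Rbar" then show "tau L z0 w \<in> Rbar" by (rule tau_Rbar)
next
  fix C :: "complex set" and b assume C: "C \<in> sets borel"
  define s0 where "s0 = side L (Some z0)"
  show "{z. Im z = 0 \<and> (case tau L z0 (Some z) of None \<Rightarrow> b | Some u \<Rightarrow> u \<in> C)} \<in> sets borel"
  proof (cases L)
    case (VLine x)
    define P where "P = {z. 0 < (Re z - x) * s0}"
    have P: "P \<in> sets borel" unfolding P_def by (intro open_pos continuous_intros)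
    have H: "{z. 2 * complex_of_real x - cnj z \<in> C} \<in> sets borel"
      by (intro vimage_borel C borel_measurable_continuous_onI continuous_intros)
    have "{z. Im z = 0 \<and> (case tau L z0 (Some z) of None \<Rightarrow> b | Some u \<Rightarrow> u \<in> C)} =
      {z. Im z = 0} \<inter> ((P \<inter> {z. 2 * complex_of_real x - cnj z \<in> C}) \<union> (- P \<inter> C))"
      by (auto simp: VLine tau_def refl_def same_side_def side_def s0_def P_def)
    also have "\<dots> \<in> sets borel" using P H C borel_axis by auto
    finally show ?thesis .
  next
    case (Circ x r)
    define P where "P = {z. 0 < (cmod (z - complex_of_real x) - r) * s0}"
    have P: "P \<in> sets borel" unfolding P_def by (intro open_pos continuous_intros)
    have hm: "(\<lambda>z. complex_of_real (r\<^sup>2) / (cnj z - complex_of_real x) + complex_of_real x) \<in> borel_measurable borel"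
      by (intro borel_measurable_add borel_measurable_divide borel_measurable_continuous_onI continuous_intros)
    have H: "{z. complex_of_real (r\<^sup>2) / (cnj z - complex_of_real x) + complex_of_real x \<in> C} \<in> sets borel"
      by (intro vimage_borel C hm)
    have X: "{complex_of_real x} \<in> sets borel" by (intro borel_closed) simp
    have "{z. Im z = 0 \<and> (case tau L z0 (Some z) of None \<Rightarrow> b | Some u \<Rightarrow> u \<in> C)} =
      {z. Im z = 0} \<inter> ((P \<inter> ((if b then {complex_of_real x} else {}) \<union>
          (- {complex_of_real x} \<inter> {z. complex_of_real (r\<^sup>2) / (cnj z - complex_of_real x) + complex_of_real x \<in> C})))
         \<union> (- P \<inter> C))"
      by (auto simp: Circ tau_def refl_def same_side_def side_def s0_def P_def)
    also have "\<dots> \<in> sets borel" using P H C X borel_axis by auto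
    finally show ?thesis .
  qed
qed




definition lists3 :: "nat \<Rightarrow> nat list set" where
  "lists3 m = {xs. set xs \<subseteq> {1,2,3} \<and> length xs = m}"

definition Vm :: "(nat \<Rightarrow> 'a \<Rightarrow> nat) \<Rightarrow> nat \<Rightarrow> 'a \<Rightarrow> nat list" where
  "Vm I m \<omega> = map (\<lambda>k. I k \<omega>) [0..<m]"

definition Fl :: "(nat \<Rightarrow> hline) \<Rightarrow> complex \<Rightarrow> nat list \<Rightarrow> complex option" where
  "Fl Ls z0 s = foldr (\<lambda>k w. tau (Ls k) z0 w) s (Some z0)"

lemma zseq_Fl: "zseq Ls z0 I \<omega> m = Fl Ls z0 (Vm I m \<omega>)"
  by (simp add: zseq_def Fl_def Vm_def foldr_map comp_def)

lemma Fl_Cons: "Fl Ls z0 (i # s) = tau (Ls i) z0 (Fl Ls z0 s)"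
  by (simp add: Fl_def)

lemma finite_lists3: "finite (lists3 m)"
  unfolding lists3_def by (rule finite_lists_length_eq) simp

lemma sum_lists3_Suc:
  "(\<Sum>s\<in>lists3 (Suc m). G s) = (\<Sum>i\<in>{1,2,3}. \<Sum>s\<in>lists3 m. G (i # s))"
proof -
  have "(\<Sum>s\<in>lists3 (Suc m). G s) = (\<Sum>s\<in>(\<lambda>(xs, n). n#xs) ` (lists3 m \<times> {1,2,3}). G s)"
    unfolding lists3_def lists_length_Suc_eq ..
  also have "\<dots> = (\<Sum>p\<in>lists3 m \<times> {1,2,3}. G (snd p # fst p))"
    by (subst sum.reindex) (auto simp: inj_on_def case_prod_beta)
  also have "\<dots> = (\<Sum>(s,i)\<in>lists3 m \<times> {1,2,3}. G (i # s))"
    by (simp add: case_prod_beta)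
  also have "\<dots> = (\<Sum>s\<in>lists3 m. \<Sum>i\<in>{1,2,3}. G (i # s))"
    by (rule sum.cartesian_product[symmetric])
  also have "\<dots> = (\<Sum>i\<in>{1,2,3}. \<Sum>s\<in>lists3 m. G (i # s))"
    by (rule sum.swap)
  finally show ?thesis .
qed

context
  fixes M :: "'a measure" and I :: "nat \<Rightarrow> 'a \<Rightarrow> nat"
  assumes P: "prob_space M"
    and indep: "prob_space.indep_vars M (\<lambda>_. count_space {1,2,3}) I UNIV"
    and unif: "\<forall>n. \<forall>k\<in>{1,2,3}. measure M {\<omega> \<in> space M. I n \<omega> = k} = 1/3"
begin

lemma I_meas: "I k \<in> measurable M (count_space {1,2,3})"
proof -
  interpret prob_space M by (rule P)
  show ?thesis using indep by (simp add: indep_vars_def)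
qed

lemma I_range: "\<omega> \<in> space M \<Longrightarrow> I k \<omega> \<in> {1,2,3}"
  using measurable_space[OF I_meas] by simp

lemma I_sets: "{\<omega> \<in> space M. I k \<omega> = j} \<in> sets M"
proof -
  have "I k -` ({j} \<inter> {1,2,3}) \<inter> space M \<in> sets M"
    by (rule measurable_sets[OF I_meas]) auto
  moreover have "I k -` ({j} \<inter> {1,2,3}) \<inter> space M = {\<omega> \<in> space M. I k \<omega> = j}"
    using I_range by auto
  ultimately show ?thesis by simp
qed

lemma Vm_lists3: "\<omega> \<in> space M \<Longrightarrow> Vm I m \<omega> \<in> lists3 m"
  using I_range by (auto simp: Vm_def lists3_def)

lemma E_eq: "length s = m \<Longrightarrow>
  {\<omega> \<in> space M. Vm I m \<omega> = s} = {\<omega> \<in> space M. \<forall>k\<in>{..<m}. I k \<omega> = s ! k}"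
  by (auto simp: Vm_def list_eq_iff_nth_eq)

lemma E_sets: "{\<omega> \<in> space M. Vm I m \<omega> = s} \<in> sets M"
proof (cases "length s = m")
  case True
  show ?thesis unfolding E_eq[OF True]
    by (intro sets.sets_Collect_finite_All I_sets) auto
next
  case False
  then have "{\<omega> \<in> space M. Vm I m \<omega> = s} = {}" by (auto simp: Vm_def)
  then show ?thesis by (metis sets.empty_sets)
qed

lemma Vm_meas: "Vm I m \<in> measurable M (count_space UNIV)"
  unfolding measurable_count_space_eq2_countable
proof (intro conjI ballI)
  fix s :: "nat list"
  have "Vm I m -` {s} \<inter> space M = {\<omega> \<in> space M. Vm I m \<omega> = s}" by auto
  then show "Vm I m -` {s} \<inter> space M \<in> sets M" using E_sets by simp
qed auto

lemma E_prob:
  assumes s: "s \<in> lists3 m"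
  shows "measure M {\<omega> \<in> space M. Vm I m \<omega> = s} = (1/3)^m"
proof -
  interpret prob_space M by (rule P)
  have len: "length s = m" and ss: "set s \<subseteq> {1,2,3}" using s by (auto simp: lists3_def)
  show ?thesis
  proof (cases "m = 0")
    case True
    then have "{\<omega> \<in> space M. Vm I m \<omega> = s} = space M" using len by (auto simp: Vm_def)
    then show ?thesis using True by (simp add: prob_space)
  next
    case False
    have sk: "s ! k \<in> {1,2,3}" if "k < m" for k using ss len that nth_mem by blast
    have "{\<omega> \<in> space M. Vm I m \<omega> = s} = (\<Inter>k\<in>{..<m}. I k -` {s ! k} \<inter> space M)"
      unfolding E_eq[OF len] using False by auto
    also have "prob \<dots> = (\<Prod>k\<in>{..<m}. prob (I k -` {s ! k} \<inter> space M))"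
      using indep False sk by (intro indep_varsD) auto
    also have "\<dots> = (\<Prod>k\<in>{..<m}. (1/3::real))"
    proof (intro prod.cong refl)
      fix k assume "k \<in> {..<m}"
      then have "s ! k \<in> {1,2,3}" using sk by auto
      moreover have "I k -` {s ! k} \<inter> space M = {\<omega> \<in> space M. I k \<omega> = s ! k}" by auto
      moreover have "prob {\<omega> \<in> space M. I k \<omega> = s ! k} = 1/3"
        using unif[rule_format, of "s ! k" k] \<open>s ! k \<in> {1,2,3}\<close> by blast
      ultimately show "prob (I k -` {s ! k} \<inter> space M) = 1/3" by simp
    qed
    finally show ?thesis by simp
  qed
qed

lemma integral_Vm:
  fixes g :: "nat list \<Rightarrow> real"
  shows "(\<integral>\<omega>. g (Vm I m \<omega>) \<partial>M) = (\<Sum>s\<in>lists3 m. g s) / 3^m"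
proof -
  interpret prob_space M by (rule P)
  define E where "E s = {\<omega> \<in> space M. Vm I m \<omega> = s}" for s
  have pt: "g (Vm I m \<omega>) = (\<Sum>s\<in>lists3 m. g s * indicator (E s) \<omega>)" if "\<omega> \<in> space M" for \<omega>
  proof -
    have "(\<Sum>s\<in>lists3 m. g s * indicator (E s) \<omega>) = (\<Sum>s\<in>lists3 m. if Vm I m \<omega> = s then g s else 0)"
      by (intro sum.cong refl) (auto simp: E_def that indicator_def)
    also have "\<dots> = g (Vm I m \<omega>)" using Vm_lists3[OF that] finite_lists3
      by (simp add: sum.delta)
    finally show ?thesis by simp
  qed
  have "(\<integral>\<omega>. g (Vm I m \<omega>) \<partial>M) = (\<integral>\<omega>. (\<Sum>s\<in>lists3 m. g s * indicator (E s) \<omega>) \<partial>M)"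
    by (rule Bochner_Integration.integral_cong) (simp_all add: pt)
  also have "\<dots> = (\<Sum>s\<in>lists3 m. (\<integral>\<omega>. g s * indicator (E s) \<omega> \<partial>M))"
  proof (rule Bochner_Integration.integral_sum)
    fix s assume "s \<in> lists3 m"
    have "E s \<in> sets M" by (simp add: E_def E_sets)
    moreover have "emeasure M (E s) < \<infinity>" by (simp add: emeasure_eq_measure)
    ultimately have "integrable M (indicator (E s) :: 'a \<Rightarrow> real)" by (rule integrable_real_indicator)
    then show "integrable M (\<lambda>\<omega>. g s * indicator (E s) \<omega>)"
      by (rule Bochner_Integration.integrable_mult_right)
  qed
  also have "\<dots> = (\<Sum>s\<in>lists3 m. g s * (1/3)^m)"
  proof (intro sum.cong refl)
    fix s assume s: "s \<in> lists3 m"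
    have "E s \<inter> space M = E s" by (auto simp: E_def)
    then show "(\<integral>\<omega>. g s * indicator (E s) \<omega> \<partial>M) = g s * (1/3)^m"
      using E_prob[OF s] by (simp add: E_def)
  qed
  also have "\<dots> = (\<Sum>s\<in>lists3 m. g s) / 3^m"
    by (simp add: sum_divide_distrib power_one_over)
  finally show ?thesis .
qed

lemma step_rel:
  fixes f :: "complex option \<Rightarrow> real"
  shows "(\<integral>\<omega>. f (zseq Ls z0 I \<omega> (Suc m)) \<partial>M) =
    (\<Sum>i\<in>{1,2,3}. (\<integral>\<omega>. f (tau (Ls i) z0 (zseq Ls z0 I \<omega> m)) \<partial>M)) / 3"
proof -
  have "(\<integral>\<omega>. f (zseq Ls z0 I \<omega> (Suc m)) \<partial>M) = (\<Sum>s\<in>lists3 (Suc m). f (Fl Ls z0 s)) / 3^Suc m"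
    unfolding zseq_Fl by (rule integral_Vm)
  also have "\<dots> = (\<Sum>i\<in>{1,2,3}. \<Sum>s\<in>lists3 m. f (tau (Ls i) z0 (Fl Ls z0 s))) / 3^Suc m"
    by (simp only: sum_lists3_Suc Fl_Cons)
  also have "\<dots> = (\<Sum>i\<in>{1,2,3}. (\<Sum>s\<in>lists3 m. f (tau (Ls i) z0 (Fl Ls z0 s))) / 3^m) / 3"
    by (simp only: sum_divide_distrib[symmetric] power_Suc divide_divide_eq_left mult.commute)
  also have "\<dots> = (\<Sum>i\<in>{1,2,3}. (\<integral>\<omega>. f (tau (Ls i) z0 (zseq Ls z0 I \<omega> m)) \<partial>M)) / 3"
  proof -
    have "(\<integral>\<omega>. f (tau (Ls i) z0 (zseq Ls z0 I \<omega> m)) \<partial>M) =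
        (\<Sum>s\<in>lists3 m. f (tau (Ls i) z0 (Fl Ls z0 s))) / 3^m" for i
      unfolding zseq_Fl using integral_Vm[of "\<lambda>s. f (tau (Ls i) z0 (Fl Ls z0 s))" m] by simp
    then show ?thesis by simp
  qed
  finally show ?thesis .
qed

end



definition ctest :: "(complex option \<Rightarrow> real) \<Rightarrow> bool" where
  "ctest f \<longleftrightarrow> (\<forall>w l. hbar_tendsto w l \<longrightarrow> (\<lambda>n. f (w n)) \<longlonglongrightarrow> f l) \<and>
     (\<forall>x. \<bar>f x\<bar> \<le> 1) \<and> f \<in> borel_measurable Rbar_M"

lemma ctest_comp:
  assumes v: "valid_line L" and f: "ctest f"
  shows "ctest (\<lambda>x. f (tau L z0 x))"
proof -
  have c: "hcont (tau L z0)" by (rule tau_cont[OF v])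
  have "f \<circ> tau L z0 \<in> borel_measurable Rbar_M"
    using measurable_comp[OF tau_meas, of f borel] f by (simp add: ctest_def)
  then show ?thesis using f c by (auto simp: ctest_def hcont_def comp_def)
qed

context
  fixes M :: "'a measure" and I :: "nat \<Rightarrow> 'a \<Rightarrow> nat" and Ls z0 and \<zeta> :: "'a \<Rightarrow> complex option"
  assumes P: "prob_space M"
    and indep: "prob_space.indep_vars M (\<lambda>_. count_space {1,2,3}) I UNIV"
    and unif: "\<forall>n. \<forall>k\<in>{1,2,3}. measure M {\<omega> \<in> space M. I n \<omega> = k} = 1/3"
    and lines: "\<forall>i\<in>{1,2,3}. valid_line (Ls i)"
    and \<zeta>_meas: "\<zeta> \<in> measurable M Rbar_M"
    and \<zeta>_lim: "AE \<omega> in M. hbar_tendsto (zseq Ls z0 I \<omega>) (\<zeta> \<omega>)"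
begin

lemma lim_int:
  assumes g: "ctest g"
  shows "(\<lambda>m. \<integral>\<omega>. g (zseq Ls z0 I \<omega> m) \<partial>M) \<longlonglongrightarrow> (\<integral>\<omega>. g (\<zeta> \<omega>) \<partial>M)"
proof (rule Bochner_Integration.integral_dominated_convergence[where w = "\<lambda>_. 1"])
  interpret prob_space M by (rule P)
  show "(\<lambda>\<omega>. g (\<zeta> \<omega>)) \<in> borel_measurable M"
    using measurable_comp[OF \<zeta>_meas, of g borel] g by (simp add: ctest_def comp_def)
  show "(\<lambda>\<omega>. g (zseq Ls z0 I \<omega> m)) \<in> borel_measurable M" for m
  proof -
    have "(\<lambda>s. g (Fl Ls z0 s)) \<in> measurable (count_space UNIV) borel" by simp
    from measurable_comp[OF Vm_meas[OF P indep unif] this] show ?thesis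
      by (simp add: comp_def zseq_Fl)
  qed
  show "integrable M (\<lambda>_. 1::real)" by simp
  show "AE \<omega> in M. (\<lambda>m. g (zseq Ls z0 I \<omega> m)) \<longlonglongrightarrow> g (\<zeta> \<omega>)"
    using \<zeta>_lim by (rule AE_mp) (use g in \<open>auto simp: ctest_def\<close>)
  show "AE \<omega> in M. norm (g (zseq Ls z0 I \<omega> m)) \<le> 1" for m
    using g by (auto simp: ctest_def)
qed

lemma key_integral:
  assumes f: "ctest f"
  shows "(\<integral>\<omega>. f (\<zeta> \<omega>) \<partial>M) = (\<Sum>i\<in>{1,2,3}. \<integral>\<omega>. f (tau (Ls i) z0 (\<zeta> \<omega>)) \<partial>M) / 3"
proof -
  have a: "(\<lambda>m. \<integral>\<omega>. f (zseq Ls z0 I \<omega> (Suc m)) \<partial>M) \<longlonglongrightarrow> (\<integral>\<omega>. f (\<zeta> \<omega>) \<partial>M)"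
    using LIMSEQ_Suc[OF lim_int[OF f]] .
  have "(\<lambda>m. (\<Sum>i\<in>{1,2,3}. \<integral>\<omega>. f (tau (Ls i) z0 (zseq Ls z0 I \<omega> m)) \<partial>M) / 3)
     \<longlonglongrightarrow> (\<Sum>i\<in>{1,2,3}. \<integral>\<omega>. f (tau (Ls i) z0 (\<zeta> \<omega>)) \<partial>M) / 3"
  proof (intro tendsto_divide tendsto_const tendsto_sum)
    fix i :: nat assume "i \<in> {1,2,3}"
    then have "valid_line (Ls i)" using lines by blast
    from lim_int[OF ctest_comp[OF this f]]
    show "(\<lambda>m. \<integral>\<omega>. f (tau (Ls i) z0 (zseq Ls z0 I \<omega> m)) \<partial>M) \<longlonglongrightarrow> (\<integral>\<omega>. f (tau (Ls i) z0 (\<zeta> \<omega>)) \<partial>M)" .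
  qed simp
  moreover have "(\<lambda>m. \<integral>\<omega>. f (zseq Ls z0 I \<omega> (Suc m)) \<partial>M) =
      (\<lambda>m. (\<Sum>i\<in>{1,2,3}. \<integral>\<omega>. f (tau (Ls i) z0 (zseq Ls z0 I \<omega> m)) \<partial>M) / 3)"
    using step_rel[OF P indep unif] by blast
  ultimately show ?thesis using a LIMSEQ_unique by metis
qed

end



definition lift0 :: "(complex \<Rightarrow> real) \<Rightarrow> complex option \<Rightarrow> real" where
  "lift0 \<phi> w = (case w of None \<Rightarrow> 0 | Some z \<Rightarrow> \<phi> z)"

lemma ctest_lift0:
  assumes c: "continuous_on UNIV \<phi>" and b: "\<And>z. \<bar>\<phi> z\<bar> \<le> 1"
    and B: "\<And>z. cmod z > B \<Longrightarrow> \<phi> z = 0"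
  shows "ctest (lift0 \<phi>)"
  unfolding ctest_def
proof (intro conjI allI impI)
  fix w l assume w: "hbar_tendsto w l"
  show "(\<lambda>n. lift0 \<phi> (w n)) \<longlonglongrightarrow> lift0 \<phi> l"
  proof (cases l)
    case None
    from w have "\<forall>\<^sub>F n in sequentially. \<forall>z. w n = Some z \<longrightarrow> B < cmod z"
      unfolding None ht_None by blast
    then have "\<forall>\<^sub>F n in sequentially. lift0 \<phi> (w n) = 0"
      by eventually_elim (auto simp: lift0_def B split: option.splits)
    then show ?thesis unfolding None by (simp add: lift0_def tendsto_eventually)
  next
    case (Some a)
    show ?thesis unfolding Some tendsto_iff
    proof (intro allI impI)
      fix e :: real assume e: "e > 0"
      have "continuous (at a) \<phi>" using c by (simp add: continuous_on_eq_continuous_at)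
      with e obtain d where d: "d > 0" "\<And>z. dist z a < d \<Longrightarrow> dist (\<phi> z) (\<phi> a) < e"
        unfolding continuous_at_eps_delta by blast
      from w d have "\<forall>\<^sub>F n in sequentially. \<exists>z. w n = Some z \<and> dist z a < d"
        unfolding Some ht_Some by blast
      then show "\<forall>\<^sub>F n in sequentially. dist (lift0 \<phi> (w n)) (lift0 \<phi> (Some a)) < e"
        by eventually_elim (auto simp: lift0_def d)
    qed
  qed
next
  fix x show "\<bar>lift0 \<phi> x\<bar> \<le> 1" using b by (simp add: lift0_def split: option.splits)
next
  show "lift0 \<phi> \<in> borel_measurable Rbar_M"
  proof (rule measurable_Rbar_M_real)
    fix U :: "real set" assume U: "open U"
    have "{z. Im z = 0 \<and> lift0 \<phi> (Some z) \<in> U} = {z. Im z = 0} \<inter> {z. \<phi> z \<in> U}"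
      by (auto simp: lift0_def)
    also have "\<dots> \<in> sets borel"
      using borel_axis vimage_borel[OF borel_measurable_continuous_onI[OF c] borel_open[OF U]] by auto
    finally show "{z. Im z = 0 \<and> lift0 \<phi> (Some z) \<in> U} \<in> sets borel" .
  qed
qed

definition phiab :: "real \<Rightarrow> real \<Rightarrow> nat \<Rightarrow> complex \<Rightarrow> real" where
  "phiab a b k z = max 0 (1 - (real k + 1) * max 0 (max (a - Re z) (Re z - b))) * max 0 (1 - \<bar>Im z\<bar>)"

lemma ctest_phiab: "ctest (lift0 (phiab a b k))"
proof (rule ctest_lift0)
  show "continuous_on UNIV (phiab a b k)" unfolding phiab_def by (intro continuous_intros)
  fix z
  have "0 \<le> max 0 (1 - (real k + 1) * max 0 (max (a - Re z) (Re z - b)))"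
       "max 0 (1 - (real k + 1) * max 0 (max (a - Re z) (Re z - b))) \<le> 1"
       "0 \<le> max 0 (1 - \<bar>Im z\<bar>)" "max 0 (1 - \<bar>Im z\<bar>) \<le> 1" by auto
  then show "\<bar>phiab a b k z\<bar> \<le> 1" unfolding phiab_def
    by (simp add: abs_mult mult_le_one)
next
  fix z :: complex assume z: "cmod z > \<bar>a\<bar> + \<bar>b\<bar> + 2"
  have "cmod z \<le> \<bar>Re z\<bar> + \<bar>Im z\<bar>" by (rule cmod_le)
  then have "\<bar>Im z\<bar> \<ge> 1 \<or> \<bar>Re z\<bar> \<ge> \<bar>a\<bar> + \<bar>b\<bar> + 1" using z by linarith
  then show "phiab a b k z = 0"
  proof
    assume "\<bar>Im z\<bar> \<ge> 1" then show ?thesis by (simp add: phiab_def)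
  next
    assume "\<bar>Re z\<bar> \<ge> \<bar>a\<bar> + \<bar>b\<bar> + 1"
    then have "max 0 (max (a - Re z) (Re z - b)) \<ge> 1" by (cases "Re z \<ge> 0") auto
    moreover have "real k + 1 \<ge> 1" by simp
    ultimately have "(real k + 1) * max 0 (max (a - Re z) (Re z - b)) \<ge> 1"
      by (metis mult_mono mult_1 zero_le_one order_trans)
    then show ?thesis by (simp add: phiab_def)
  qed
qed

definition Sset :: "real set \<Rightarrow> complex option set" where
  "Sset C = {Some z | z. Im z = 0 \<and> Re z \<in> C}"

lemma Sset_sets: "C \<in> sets borel \<Longrightarrow> Sset C \<in> sets Rbar_M"
proof (rule in_sets_Rbar_M)
  assume C: "C \<in> sets borel"
  show "Sset C \<subseteq> Rbar" by (auto simp: Sset_def Rbar_def)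
  have "{z. Some z \<in> Sset C} = {z. Im z = 0} \<inter> {z. Re z \<in> C}" by (auto simp: Sset_def)
  also have "\<dots> \<in> sets borel"
  proof -
    have "continuous_on UNIV Re" by (intro continuous_intros)
    then have "{z. Re z \<in> C} \<in> sets borel"
      using vimage_borel[OF borel_measurable_continuous_onI C] by blast
    then show ?thesis using borel_axis by auto
  qed
  finally show "{z. Some z \<in> Sset C} \<in> sets borel" .
qed

lemma phiab_lim:
  assumes "Im z = 0"
  shows "(\<lambda>k. phiab a b k z) \<longlonglongrightarrow> indicator {a..b} (Re z)"
proof (cases "Re z \<in> {a..b}")
  case True
  then have "phiab a b k z = 1" for k using assms by (simp add: phiab_def)
  then show ?thesis using True by simp
next
  case False
  define d where "d = max 0 (max (a - Re z) (Re z - b))"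
  have d: "d > 0" using False by (auto simp: d_def)
  obtain N :: nat where N: "1 / d < real N" using reals_Archimedean2 by blast
  have "\<forall>\<^sub>F k in sequentially. phiab a b k z = 0"
    unfolding eventually_sequentially
  proof (intro exI allI impI)
    fix k assume "N \<le> k"
    then have "1 / d < real k + 1" using N by linarith
    then have "1 < (real k + 1) * d" using d by (simp add: divide_less_eq)
    then show "phiab a b k z = 0" by (simp add: phiab_def d_def[symmetric])
  qed
  then show ?thesis using False by (simp add: tendsto_eventually)
qed

lemma lift0_phiab_lim:
  assumes "x \<in> Rbar"
  shows "(\<lambda>k. lift0 (phiab a b k) x) \<longlonglongrightarrow> indicator (Sset {a..b}) x"
proof (cases x)
  case None then show ?thesis by (simp add: lift0_def Sset_def)
next
  case (Some z)
  with assms have z: "Im z = 0" by (auto simp: Rbar_def)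
  have "indicator (Sset {a..b}) x = (indicator {a..b} (Re z) :: real)"
    using Some z by (auto simp: Sset_def indicator_def)
  then show ?thesis using phiab_lim[OF z] Some by (simp add: lift0_def)
qed

lemma lim_meas:
  assumes N: "prob_space N" and sN: "sets N = sets Rbar_M"
  shows "(\<lambda>k. \<integral>x. lift0 (phiab a b k) x \<partial>N) \<longlonglongrightarrow> measure N (Sset {a..b})"
proof -
  interpret prob_space N by (rule N)
  have sp: "space N = Rbar" using sets_eq_imp_space_eq[OF sN] by (simp add: space_Rbar_M)
  have S: "Sset {a..b} \<in> sets N" using Sset_sets sN by simp
  have "(\<lambda>k. \<integral>x. lift0 (phiab a b k) x \<partial>N) \<longlonglongrightarrow> (\<integral>x. indicator (Sset {a..b}) x \<partial>N)"
  proof (rule Bochner_Integration.integral_dominated_convergence[where w = "\<lambda>_. 1"])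
    show "indicator (Sset {a..b}) \<in> borel_measurable N" using S by simp
    show "lift0 (phiab a b k) \<in> borel_measurable N" for k
    proof -
      have m: "lift0 (phiab a b k) \<in> borel_measurable Rbar_M"
        using ctest_phiab[of a b k] by (simp add: ctest_def)
      show ?thesis using m unfolding measurable_cong_sets[OF sN refl[of "sets borel"]] .
    qed
    show "integrable N (\<lambda>_. 1::real)" by simp
    show "AE x in N. (\<lambda>k. lift0 (phiab a b k) x) \<longlonglongrightarrow> indicator (Sset {a..b}) x"
      by (rule AE_I2) (simp add: sp lift0_phiab_lim)
    show "AE x in N. norm (lift0 (phiab a b k) x) \<le> 1" for k
      using ctest_phiab[of a b k] by (auto simp: ctest_def)
  qed
  moreover have "Sset {a..b} \<inter> space N = Sset {a..b}" using S sets.sets_into_space by blast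
  ultimately show ?thesis by simp
qed




lemma Sset_UNIV: "Sset UNIV = (\<Union>n. Sset {- real n..real n})"
proof (intro equalityI subsetI)
  fix x assume "x \<in> Sset UNIV"
  then obtain z where z: "x = Some z" "Im z = 0" by (auto simp: Sset_def)
  obtain n :: nat where "\<bar>Re z\<bar> \<le> real n" using real_arch_simple by blast
  then have "Re z \<in> {- real n..real n}" by auto
  then show "x \<in> (\<Union>n. Sset {- real n..real n})" using z by (auto simp: Sset_def)
qed (auto simp: Sset_def)

lemma Sset_UNIV_lim:
  assumes N: "prob_space N" and sN: "sets N = sets Rbar_M"
  shows "(\<lambda>n. measure N (Sset {- real n..real n})) \<longlonglongrightarrow> measure N (Sset UNIV)"
proof -
  interpret prob_space N by (rule N)
  show ?thesis unfolding Sset_UNIV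
  proof (rule finite_Lim_measure_incseq)
    show "range (\<lambda>n. Sset {- real n..real n}) \<subseteq> sets N" using Sset_sets sN by auto
    show "incseq (\<lambda>n. Sset {- real n..real n})"
      by (rule incseq_SucI) (auto simp: Sset_def)
  qed
qed

lemma decomp:
  assumes N: "prob_space N" and sN: "sets N = sets Rbar_M" and A: "A \<in> sets Rbar_M"
  shows "measure N A = measure N (Sset {t. Some (complex_of_real t) \<in> A}) +
           (if None \<in> A then 1 - measure N (Sset UNIV) else 0)"
proof -
  interpret prob_space N by (rule N)
  have sp: "space N = Rbar" using sets_eq_imp_space_eq[OF sN] by (simp add: space_Rbar_M)
  define C where "C = {t. Some (complex_of_real t) \<in> A}"
  have AR: "A \<subseteq> Rbar" and Ab: "{z. Some z \<in> A} \<in> sets borel" using A by (auto simp: sets_Rbar_M)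
  have cof: "continuous_on UNIV complex_of_real" by (intro continuous_intros)
  have Cb: "C \<in> sets borel" unfolding C_def
    using vimage_borel[OF borel_measurable_continuous_onI[OF cof] Ab] by simp
  have SC: "Sset C \<in> sets N" using Sset_sets[OF Cb] sN by simp
  have SU: "Sset UNIV \<in> sets N" using Sset_sets[of UNIV] sN by simp
  have AN: "A \<in> sets N" using A sN by simp
  have eq1: "A - {None} = Sset C"
  proof (intro equalityI subsetI)
    fix x assume x: "x \<in> A - {None}"
    then obtain z where z: "x = Some z" by (cases x) auto
    with x AR have "Im z = 0" by (auto simp: Rbar_def)
    then have "z = complex_of_real (Re z)" by (simp add: complex_eq_iff)
    then show "x \<in> Sset C" using x z \<open>Im z = 0\<close> by (auto simp: Sset_def C_def)
  next
    fix x assume "x \<in> Sset C"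
    then obtain z where z: "x = Some z" "Im z = 0" "Re z \<in> C" by (auto simp: Sset_def)
    then have "z = complex_of_real (Re z)" by (simp add: complex_eq_iff)
    then show "x \<in> A - {None}" using z by (auto simp: C_def)
  qed
  have none: "measure N {None} = 1 - measure N (Sset UNIV)"
  proof -
    have "{None} = space N - Sset UNIV" by (auto simp: sp Rbar_def Sset_def)
    then show ?thesis using prob_compl[OF SU] by simp
  qed
  show ?thesis
  proof (cases "None \<in> A")
    case True
    have "A = Sset C \<union> {None}" using eq1 True by blast
    moreover have "Sset C \<inter> {None} = {}" by (auto simp: Sset_def)
    moreover have "{None} \<in> sets N" unfolding sN
      by (rule in_sets_Rbar_M) (auto simp: Rbar_def)
    ultimately have "measure N A = measure N (Sset C) + measure N {None}"
      using SC finite_measure_Union[of "Sset C" "{None}"] by metis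
    then show ?thesis using True none by (simp add: C_def)
  next
    case False
    then have "A = Sset C" using eq1 by blast
    then show ?thesis using False by (simp add: C_def)
  qed
qed

lemma Sset_empty: "Sset {} = {}" by (simp add: Sset_def)

lemma Sset_Diff_meas:
  assumes N: "prob_space N" and sN: "sets N = sets Rbar_M" and A: "A \<in> sets borel"
  shows "measure N (Sset (UNIV - A)) = measure N (Sset UNIV) - measure N (Sset A)"
proof -
  interpret prob_space N by (rule N)
  have e: "Sset (UNIV - A) = Sset UNIV - Sset A" by (auto simp: Sset_def)
  have "Sset UNIV \<in> sets N" "Sset A \<in> sets N" using Sset_sets[OF A] Sset_sets[of UNIV] sN by auto
  moreover have "Sset A \<subseteq> Sset UNIV" by (auto simp: Sset_def)
  ultimately show ?thesis unfolding e by (rule finite_measure_Diff)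
qed

lemma Sset_UN_sums:
  assumes N: "prob_space N" and sN: "sets N = sets Rbar_M" and A: "\<And>i. A i \<in> sets borel"
    and d: "disjoint_family A"
  shows "(\<lambda>i. measure N (Sset (A i))) sums measure N (Sset (\<Union>i. A i))"
proof -
  interpret prob_space N by (rule N)
  have e: "Sset (\<Union>i. A i) = (\<Union>i. Sset (A i))" by (auto simp: Sset_def)
  have "range (\<lambda>i. Sset (A i)) \<subseteq> sets N" using Sset_sets[OF A] sN by auto
  moreover have "disjoint_family (\<lambda>i. Sset (A i))"
    using d by (auto simp: disjoint_family_on_def Sset_def)
  ultimately show ?thesis unfolding e by (rule finite_measure_UNION)
qed

lemma C_borel: "A \<in> sets Rbar_M \<Longrightarrow> {t. Some (complex_of_real t) \<in> A} \<in> sets borel"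
proof -
  assume A: "A \<in> sets Rbar_M"
  have Ab: "{z. Some z \<in> A} \<in> sets borel" using A by (auto simp: sets_Rbar_M)
  have cof: "continuous_on UNIV complex_of_real" by (intro continuous_intros)
  show ?thesis using vimage_borel[OF borel_measurable_continuous_onI[OF cof] Ab] by simp
qed

context
  fixes M :: "'a measure" and I :: "nat \<Rightarrow> 'a \<Rightarrow> nat" and Ls z0 and \<zeta> :: "'a \<Rightarrow> complex option"
  assumes P: "prob_space M"
    and indep: "prob_space.indep_vars M (\<lambda>_. count_space {1,2,3}) I UNIV"
    and unif: "\<forall>n. \<forall>k\<in>{1,2,3}. measure M {\<omega> \<in> space M. I n \<omega> = k} = 1/3"
    and lines: "\<forall>i\<in>{1,2,3}. valid_line (Ls i)"
    and \<zeta>_meas: "\<zeta> \<in> measurable M Rbar_M"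
    and \<zeta>_lim: "AE \<omega> in M. hbar_tendsto (zseq Ls z0 I \<omega>) (\<zeta> \<omega>)"
begin

abbreviation "mu \<equiv> distr M Rbar_M \<zeta>"
abbreviation "nu i \<equiv> distr mu Rbar_M (tau (Ls i) z0)"

lemma mu_prob: "prob_space mu"
  by (rule prob_space.prob_space_distr[OF P \<zeta>_meas])

lemma nu_prob: "prob_space (nu i)"
  by (rule prob_space.prob_space_distr[OF mu_prob]) (simp add: tau_meas)

lemma mu_sets: "sets mu = sets Rbar_M" by simp
lemma nu_sets: "sets (nu i) = sets Rbar_M" by simp

lemma int_eq:
  assumes f: "ctest f"
  shows "(\<integral>x. f x \<partial>mu) = (\<Sum>i\<in>{1,2,3}. \<integral>x. f x \<partial>nu i) / 3"
proof -
  have fm: "f \<in> borel_measurable Rbar_M" using f by (simp add: ctest_def)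
  have a: "(\<integral>x. f x \<partial>mu) = (\<integral>\<omega>. f (\<zeta> \<omega>) \<partial>M)"
    by (rule integral_distr[OF \<zeta>_meas fm])
  have b: "(\<integral>x. f x \<partial>nu i) = (\<integral>\<omega>. f (tau (Ls i) z0 (\<zeta> \<omega>)) \<partial>M)" for i
  proof -
    have fm2: "(\<lambda>x. f (tau (Ls i) z0 x)) \<in> borel_measurable Rbar_M"
      using measurable_comp[OF tau_meas fm] by (simp add: comp_def)
    have "(\<integral>x. f x \<partial>nu i) = (\<integral>x. f (tau (Ls i) z0 x) \<partial>mu)"
      by (rule integral_distr) (simp_all add: tau_meas fm)
    also have "\<dots> = (\<integral>\<omega>. f (tau (Ls i) z0 (\<zeta> \<omega>)) \<partial>M)"
      by (rule integral_distr[OF \<zeta>_meas fm2])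
    finally show ?thesis .
  qed
  show ?thesis unfolding a b by (rule key_integral[OF P indep unif lines \<zeta>_meas \<zeta>_lim f])
qed

definition "Q C \<longleftrightarrow> measure mu (Sset C) = (\<Sum>i\<in>{1,2,3}. measure (nu i) (Sset C)) / 3"

lemma Q_interval: "Q {a..b}"
proof -
  have l: "(\<lambda>k. \<integral>x. lift0 (phiab a b k) x \<partial>mu) \<longlonglongrightarrow> measure mu (Sset {a..b})"
    by (rule lim_meas[OF mu_prob mu_sets])
  have r: "(\<lambda>k. (\<Sum>i\<in>{1,2,3}. \<integral>x. lift0 (phiab a b k) x \<partial>nu i) / 3)
       \<longlonglongrightarrow> (\<Sum>i\<in>{1,2,3}. measure (nu i) (Sset {a..b})) / 3"
    by (intro tendsto_divide tendsto_const tendsto_sum lim_meas[OF nu_prob nu_sets]) simp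
  have eq: "(\<lambda>k. \<integral>x. lift0 (phiab a b k) x \<partial>mu) =
      (\<lambda>k. (\<Sum>i\<in>{1,2,3}. \<integral>x. lift0 (phiab a b k) x \<partial>nu i) / 3)"
    by (rule ext) (rule int_eq[OF ctest_phiab])
  have l2: "(\<lambda>k. (\<Sum>i\<in>{1,2,3}. \<integral>x. lift0 (phiab a b k) x \<partial>nu i) / 3)
       \<longlonglongrightarrow> measure mu (Sset {a..b})" using l unfolding eq .
  show ?thesis unfolding Q_def by (rule LIMSEQ_unique[OF l2 r])
qed

lemma Q_UNIV: "Q UNIV"
proof -
  have l: "(\<lambda>n. measure mu (Sset {- real n..real n})) \<longlonglongrightarrow> measure mu (Sset UNIV)"
    by (rule Sset_UNIV_lim[OF mu_prob mu_sets])
  have r: "(\<lambda>n. (\<Sum>i\<in>{1,2,3}. measure (nu i) (Sset {- real n..real n})) / 3)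
       \<longlonglongrightarrow> (\<Sum>i\<in>{1,2,3}. measure (nu i) (Sset UNIV)) / 3"
    by (intro tendsto_divide tendsto_const tendsto_sum Sset_UNIV_lim[OF nu_prob nu_sets]) simp
  have eq: "(\<lambda>n. measure mu (Sset {- real n..real n})) =
      (\<lambda>n. (\<Sum>i\<in>{1,2,3}. measure (nu i) (Sset {- real n..real n})) / 3)"
    by (rule ext) (rule Q_interval[unfolded Q_def])
  have l2: "(\<lambda>n. (\<Sum>i\<in>{1,2,3}. measure (nu i) (Sset {- real n..real n})) / 3)
       \<longlonglongrightarrow> measure mu (Sset UNIV)" using l unfolding eq .
  show ?thesis unfolding Q_def by (rule LIMSEQ_unique[OF l2 r])
qed

lemma Q_borel:
  assumes C: "C \<in> sets borel"
  shows "Q C"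
proof -
  define G where "G = range (\<lambda>(a,b). {a..b::real})"
  have "sets borel = sets (sigma UNIV G)" unfolding G_def
    by (subst borel_eq_atLeastAtMost) (rule refl)
  also have "\<dots> = sigma_sets UNIV G" by (rule sets_measure_of) simp
  finally have sb: "sets borel = sigma_sets UNIV G" .
  have IS: "Int_stable G" unfolding Int_stable_def
  proof (intro ballI)
    fix X Y assume "X \<in> G" "Y \<in> G"
    then obtain a b c d where XY: "X = {a..b::real}" "Y = {c..d}" by (auto simp: G_def)
    then have "X \<inter> Y = {max a c..min b d}" by auto
    moreover have "{max a c..min b d} \<in> G" unfolding G_def
      by (rule range_eqI[of _ _ "(max a c, min b d)"]) simp
    ultimately show "X \<inter> Y \<in> G" by simp
  qed
  have GP: "G \<subseteq> Pow UNIV" by simp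
  have "C \<in> sigma_sets UNIV G" using C sb by simp
  with IS GP show ?thesis
  proof (induction rule: sigma_sets_induct_disjoint)
    case (basic A)
    then obtain a b where "A = {a..b}" by (auto simp: G_def)
    then show ?case using Q_interval by simp
  next
    case empty show ?case by (simp add: Q_def Sset_empty)
  next
    case (compl A)
    then have Ab: "A \<in> sets borel" using sb by simp
    have m: "measure mu (Sset (UNIV - A)) = measure mu (Sset UNIV) - measure mu (Sset A)"
      by (rule Sset_Diff_meas[OF mu_prob mu_sets Ab])
    have n: "measure (nu i) (Sset (UNIV - A)) = measure (nu i) (Sset UNIV) - measure (nu i) (Sset A)" for i
      by (rule Sset_Diff_meas[OF nu_prob nu_sets Ab])
    from compl(2) Q_UNIV show ?case unfolding Q_def m n by simp
  next
    case (union A)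
    then have Ab: "\<And>i. A i \<in> sets borel" using sb by auto
    have l: "(\<lambda>i. measure mu (Sset (A i))) sums measure mu (Sset (\<Union>i. A i))"
      by (rule Sset_UN_sums[OF mu_prob mu_sets Ab union(1)])
    have r: "(\<lambda>i. (\<Sum>j\<in>{1,2,3}. measure (nu j) (Sset (A i))) / 3) sums
       ((\<Sum>j\<in>{1,2,3}. measure (nu j) (Sset (\<Union>i. A i))) / 3)"
      by (intro sums_divide sums_sum Sset_UN_sums[OF nu_prob nu_sets Ab union(1)])
    have eq: "(\<lambda>i. measure mu (Sset (A i))) = (\<lambda>i. (\<Sum>j\<in>{1,2,3}. measure (nu j) (Sset (A i))) / 3)"
      using union(3) unfolding Q_def by blast
    show ?case unfolding Q_def using l r unfolding eq by (rule sums_unique2)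
  qed
qed

lemma final_real:
  assumes A: "A \<in> sets Rbar_M"
  shows "measure mu A = (\<Sum>i\<in>{1,2,3}. measure (nu i) A) / 3"
proof -
  define C where "C = {t. Some (complex_of_real t) \<in> A}"
  have QC: "Q C" unfolding C_def by (rule Q_borel[OF C_borel[OF A]])
  have dm: "measure mu A = measure mu (Sset C) + (if None \<in> A then 1 - measure mu (Sset UNIV) else 0)"
    unfolding C_def by (rule decomp[OF mu_prob mu_sets A])
  have dn: "measure (nu i) A = measure (nu i) (Sset C) + (if None \<in> A then 1 - measure (nu i) (Sset UNIV) else 0)" for i
    unfolding C_def by (rule decomp[OF nu_prob nu_sets A])
  show ?thesis using QC Q_UNIV unfolding Q_def dm dn by simp
qed

lemma final_emeasure:
  "\<forall>A \<in> sets Rbar_M. emeasure mu A = (\<Sum>i\<in>{1,2,3}. emeasure (nu i) A) / 3"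
proof
  fix A assume A: "A \<in> sets Rbar_M"
  have e1: "emeasure mu A = ennreal (measure mu A)"
  proof -
    interpret X: prob_space mu by (rule mu_prob)
    show ?thesis by (rule X.emeasure_eq_measure)
  qed
  have e2: "emeasure (nu i) A = ennreal (measure (nu i) A)" for i
  proof -
    interpret X: prob_space "nu i" by (rule nu_prob)
    show ?thesis by (rule X.emeasure_eq_measure)
  qed
  have "(\<Sum>i\<in>{1,2,3}. emeasure (nu i) A) / 3 = ennreal (\<Sum>i\<in>{1,2,3}. measure (nu i) A) / ennreal 3"
    unfolding e2 by (subst sum_ennreal) (auto simp: ennreal_numeral)
  also have "\<dots> = ennreal ((\<Sum>i\<in>{1,2,3}. measure (nu i) A) / 3)"
    by (rule divide_ennreal) (auto intro: sum_nonneg)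
  finally show "emeasure mu A = (\<Sum>i\<in>{1,2,3}. emeasure (nu i) A) / 3"
    unfolding e1 final_real[OF A] by simp
qed

end

theorem mainTheorem3:
  fixes Ls :: "nat \<Rightarrow> hline" and z0 :: complex
    and M :: "'a measure" and I :: "nat \<Rightarrow> 'a \<Rightarrow> nat" and \<zeta> :: "'a \<Rightarrow> complex option"
  assumes lines: "\<forall>i\<in>{1,2,3}. valid_line (Ls i)"
    and z0: "Im z0 > 0"
    and config: "\<forall>i\<in>{1,2,3::nat}. \<forall>i'\<in>{1,2,3}. i \<noteq> i' \<longrightarrow>
                   cond_a (Ls i) (Ls i') z0 \<or> cond_b (Ls i) (Ls i') z0"
    and P: "prob_space M"
    and indep: "prob_space.indep_vars M (\<lambda>_. count_space {1,2,3}) I UNIV"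
    and unif: "\<forall>n. \<forall>k\<in>{1,2,3}. measure M {\<omega> \<in> space M. I n \<omega> = k} = 1/3"
    and \<zeta>_meas: "\<zeta> \<in> measurable M Rbar_M"
    and \<zeta>_lim: "AE \<omega> in M. hbar_tendsto (zseq Ls z0 I \<omega>) (\<zeta> \<omega>)"
  shows "\<forall>A \<in> sets Rbar_M.
           emeasure (distr M Rbar_M \<zeta>) A =
           (\<Sum>i\<in>{1,2,3}. emeasure (distr (distr M Rbar_M \<zeta>) Rbar_M (tau (Ls i) z0)) A) / 3"
  by (rule final_emeasure[OF P indep unif lines \<zeta>_meas \<zeta>_lim])

end
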